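(* Let $k\ge 4$ and let $w$ be a word over $\{a,b\}$. Let $p$ be an occurrence of $u=ba^{k-1}$ and $q$ an occurrence of $v=b^{k-1}a$ in $w$ that are consecutive ($p$ before $q$), with sets of forbidden local positions $F_p$ and $F_q$, and suppose $|F_p|=|F_q|$. Suppose $F_q=\{0,i,i+1,\dots,k-2\}$ for some $2\le i\le k-2$, and suppose $F_p$ is a single cyclic block, i.e. $F_p=\{c,c+1,\dots,c+m-1\}$ with all elements taken modulo $k$, for some $c\in\{0,\dots,k-1\}$ and $m\ge 1$. Then either $F_p=\{0,1\}\cup\{i+2,i+3,\dots,k-1\}$ or $F_p=\{0\}\cup\{i+1,i+2,\dots,k-1\}$.
   Context: $\Sigma=\{a,b\}$. $S_k=\left(\Sigma^k\setminus\{ba^{k-1},b^{k-1}a\}\right)\cup\left(\Sigma^{k-1}\setminus\{a^{k-1},b^{k-1}\}\right)$, $u=ba^{k-1}$, $v=b^{k-1}a$. $\mathit{Pref}(S^* )$ denotes the set of prefixes of words in $S^*$. For $w=w_1\cdots w_n$, $w[i..j]=w_i\cdots w_j$ (empty if $i>j$). A position $j$, $0\le j\le n-1$, is forbidden in $w$ if $w[j+1..n]\notin\mathit{Pref}(S_k^* )$. An occurrence of $p\in\{u,v\}$ in $w$ is an index $s$ with $w[s+1..s+k]=p$; local position $i\in\{0,\dots,k-1\}$ is the position $s+i$ of $w$, and it is forbidden in the occurrence if $s+i$ is forbidden in $w$. Two occurrences of words from $\{u,v\}$ starting at $s<t$ overlap if $t<s+k$; they are consecutive if either they overlap or they are the only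 occurrences of $u$ or $v$ lying inside the factor $w[s+1..t+k]$. *)

theory Defs
  imports Main
begin

datatype letter = a | b

definition u_word :: "nat \<Rightarrow> letter list" where
  "u_word k = b # replicate (k - 1) a"

definition v_word :: "nat \<Rightarrow> letter list" where
  "v_word k = replicate (k - 1) b @ [a]"

definition S_set :: "nat \<Rightarrow> letter list set" where
  "S_set k = {x. length x = k \<and> x \<noteq> u_word k \<and> x \<noteq> v_word k}
           \<union> {x. length x = k - 1 \<and> x \<noteq> replicate (k - 1) a \<and> x \<noteq> replicate (k - 1) b}"

definition star :: "'x list set \<Rightarrow> 'x list set" where
  "star L = {concat xs | xs. set xs \<subseteq> L}"

definition Pref :: "'x list set \<Rightarrow> 'x list set" where
  "Pref L = {x. \<exists>y. x @ y \<in> L}"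

text \<open>Position j (0 <= j <= n-1) is forbidden in w iff w[j+1..n] = drop j w is not in Pref(S_k^*).\<close>
definition forbidden :: "nat \<Rightarrow> letter list \<Rightarrow> nat \<Rightarrow> bool" where
  "forbidden k w j \<longleftrightarrow> j < length w \<and> drop j w \<notin> Pref (star (S_set k))"

text \<open>Occurrence of p starting at index s: w[s+1..s+|p|] = p.\<close>
definition occ :: "letter list \<Rightarrow> letter list \<Rightarrow> nat \<Rightarrow> bool" where
  "occ w p s \<longleftrightarrow> s + length p \<le> length w \<and> take (length p) (drop s w) = p"

definition forb_local :: "nat \<Rightarrow> letter list \<Rightarrow> nat \<Rightarrow> nat set" where
  "forb_local k w s = {i. i < k \<and> forbidden k w (s + i)}"

definition consecutive :: "nat \<Rightarrow> letter list \<Rightarrow> nat \<Rightarrow> nat \<Rightarrow> bool" where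
  "consecutive k w s t \<longleftrightarrow> s < t \<and>
     (t < s + k \<or>
      (\<forall>r. s \<le> r \<and> r + k \<le> t + k \<and> (occ w (u_word k) r \<or> occ w (v_word k) r)
            \<longrightarrow> r = s \<or> r = t))"

end

theory Submission
  imports Defs
begin


lemma block_top:
  assumes "B = {(c + j) mod (k::nat) | j. j < m}"
    and "x \<in> B" "(x+1) mod k \<notin> B" "y \<in> B" "(y+1) mod k \<notin> B"
  shows "x = y"
proof -
  obtain j1 where j1: "j1 < m" "x = (c+j1) mod k" using assms by auto
  obtain j2 where j2: "j2 < m" "y = (c+j2) mod k" using assms by auto
  have "j1 + 1 \<ge> m"
  proof (rule ccontr)
    assume "\<not> ?thesis"
    hence "j1+1 < m" by simp
    hence "(c + (j1+1)) mod k \<in> B" unfolding assms(1) by blast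
    moreover have "(x+1) mod k = (c + (j1+1)) mod k" using j1 by (simp add: mod_Suc_eq add.assoc)
    ultimately show False using assms(3) by simp
  qed
  moreover have "j2 + 1 \<ge> m"
  proof (rule ccontr)
    assume "\<not> ?thesis"
    hence "j2+1 < m" by simp
    hence "(c + (j2+1)) mod k \<in> B" unfolding assms(1) by blast
    moreover have "(y+1) mod k = (c + (j2+1)) mod k" using j2 by (simp add: mod_Suc_eq add.assoc)
    ultimately show False using assms(5) by simp
  qed
  ultimately have "j1 = j2" using j1 j2 by simp
  thus ?thesis using j1 j2 by simp
qed

lemma card_P0: "2 \<le> (i::nat) \<Longrightarrow> i \<le> k - 2 \<Longrightarrow> card ({0} \<union> {i..k-2}) = k - i"
  by simp

lemma final_comb:
  fixes k i e c m :: nat and Y Z :: "nat set"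
  assumes k4: "k \<ge> 4" and i2: "2 \<le> i" and ik: "i \<le> k-2"
    and Ysub: "Y \<subseteq> {0} \<union> {i..k-2}"
    and UC: "\<forall>r. r \<in> Y \<longrightarrow> i \<le> r \<longrightarrow> r+1 \<le> k-2 \<longrightarrow> r+1 \<in> Y"
    and e: "e < k"
    and Z1: "Z \<subseteq> Y \<union> {e}" and Z2: "Y - {e} \<subseteq> Z"
    and Z3: "e \<in> Z \<Longrightarrow> (e+k-1) mod k \<in> Y"
    and cardZ: "card Z = k - i"
    and blk: "Z = {(c + j) mod k | j. j < m}"
  shows "(e = k-1 \<and> (Z = {i..k-1} \<or> Z = {0} \<union> {i+1..k-1})) \<or> (e = 1 \<and> i = k-2 \<and> Z = {0,1})"
proof -
  define P0 where "P0 = {0} \<union> {i..k-2}"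
  have fP0: "finite P0" by (simp add: P0_def)
  have cP0: "card P0 = k - i" unfolding P0_def using i2 ik by simp
  have notP0: "Z \<noteq> P0"
  proof
    assume "Z = P0"
    hence "0 \<in> Z" "(0+1) mod k \<notin> Z" "k-2 \<in> Z" "(k-2+1) mod k \<notin> Z"
      using i2 ik k4 by (auto simp: P0_def)
    hence "0 = k-2" using block_top[OF blk] by blast
    thus False using k4 by simp
  qed
  have eqP0: "Z \<subseteq> P0 \<Longrightarrow> False"
    using card_subset_eq[OF fP0, of Z] cardZ cP0 notP0 by simp
  have eZ: "e \<in> Z"
  proof (rule ccontr)
    assume "e \<notin> Z"
    hence "Z \<subseteq> P0" using Z1 Ysub by (auto simp: P0_def)
    thus False using eqP0 by simp
  qed
  have eP0: "e \<notin> P0"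
  proof
    assume "e \<in> P0"
    hence "Z \<subseteq> P0" using Z1 Ysub by (auto simp: P0_def)
    thus False using eqP0 by simp
  qed
  hence eY: "e \<notin> Y" using Ysub P0_def by auto
  have Zeq: "Z = insert e Y" using Z1 Z2 eZ eY by auto
  have fY: "finite Y" using Ysub finite_subset by auto
  have cY: "card Y = k - i - 1" using Zeq cardZ eY fY by simp
  have YP: "Y \<subseteq> P0" using Ysub P0_def by simp
  have "card (P0 - Y) = 1" using card_Diff_subset[OF fY YP] cY cP0 i2 ik by simp
  then obtain y0 where y0: "P0 - Y = {y0}" using card_1_singletonE by blast
  have Yeq: "Y = P0 - {y0}" using y0 YP by blast
  have y0P: "y0 \<in> P0" using y0 by blast
  have y0c: "y0 = 0 \<or> y0 = i"
  proof (rule ccontr)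
    assume "\<not> ?thesis"
    hence "i + 1 \<le> y0" "y0 \<le> k - 2" using y0P P0_def by auto
    hence "y0 - 1 \<in> Y" using Yeq P0_def by auto
    hence "y0 - 1 + 1 \<in> Y" using UC \<open>i+1 \<le> y0\<close> \<open>y0 \<le> k-2\<close> by auto
    thus False using \<open>i+1 \<le> y0\<close> Yeq by simp
  qed
  have dY: "(e+k-1) mod k \<in> Y" using Z3 eZ by simp
  have ecase: "e = k-1 \<or> (1 \<le> e \<and> e < i)" using eP0 e P0_def by auto
  show ?thesis
  proof (cases "e = k-1")
    case True
    have "Z = insert (k-1) (P0 - {y0})" using Zeq Yeq True by simp
    hence "Z = {i..k-1} \<or> Z = {0} \<union> {i+1..k-1}" using y0c i2 ik k4 unfolding P0_def by auto
    thus ?thesis using True by simp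
  next
    case False
    hence e1: "1 \<le> e" "e < i" using ecase by auto
    hence "(e+k-1) mod k = e - 1" using k4 ik
      by (metis Nat.add_diff_assoc2 add.commute le_add_diff_inverse2 less_imp_diff_less mod_add_self2 mod_less e)
    hence "e - 1 \<in> Y" using dY by simp
    hence "e - 1 \<in> {0} \<union> {i..k-2}" using Ysub by blast
    hence "e - 1 = 0" using e1 by auto
    hence ee: "e = 1" using e1 by simp
    have "0 \<in> Y" using \<open>e-1 \<in> Y\<close> \<open>e-1=0\<close> by simp
    hence "y0 = i" using y0c Yeq by auto
    hence Zf: "Z = {0,1} \<union> {i+1..k-2}" using Zeq Yeq ee i2 unfolding P0_def by auto
    show ?thesis
    proof (cases "i = k-2")
      case True thus ?thesis using Zf ee by simp
    next
      case False
      hence "1 \<in> Z" "(1+1) mod k \<notin> Z" "k-2 \<in> Z" "(k-2+1) mod k \<notin> Z"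
        using Zf i2 ik k4 by auto
      hence "1 = k-2" using block_top[OF blk] by blast
      thus ?thesis using k4 by simp
    qed
  qed
qed



lemma pref_cons:
  assumes "z \<in> S" "r \<in> Pref (star S)"
  shows "z @ r \<in> Pref (star S)"
proof -
  obtain y xs where "r @ y = concat xs" "set xs \<subseteq> S"
    using assms(2) unfolding Pref_def star_def by blast
  hence "(z @ r) @ y = concat (z # xs)" "set (z#xs) \<subseteq> S" using assms(1) by auto
  thus ?thesis unfolding Pref_def star_def by blast
qed

lemma pref_split:
  assumes "x \<in> Pref (star S)" "x \<noteq> []" "[] \<notin> S" "\<forall>z\<in>S. length z \<le> length x"
  shows "\<exists>z\<in>S. take (length z) x = z \<and> drop (length z) x \<in> Pref (star S)"
proof -
  obtain y xs where xy: "x @ y = concat xs" "set xs \<subseteq> S"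
    using assms(1) unfolding Pref_def star_def by blast
  then obtain z zs where xs: "xs = z # zs" using assms(2) by (cases xs) auto
  have zS: "z \<in> S" using xy xs by auto
  have lz: "length z \<le> length x" using assms(4) zS by auto
  have e: "x @ y = z @ concat zs" using xy xs by simp
  have t: "take (length z) x = z" using e lz
    by (metis append_eq_append_conv_if take_all_iff)
  have "drop (length z) x @ y = concat zs" using e lz
    by (auto simp: append_eq_append_conv_if split: if_splits)
  moreover have "set zs \<subseteq> S" using xy xs by auto
  ultimately have "drop (length z) x \<in> Pref (star S)" unfolding Pref_def star_def by blast
  thus ?thesis using t zS by blast
qed

lemma S_len: "x \<in> S_set k \<Longrightarrow> length x = k \<or> length x = k - 1"
  unfolding S_set_def by auto

lemma step_block:
  assumes "p + length z \<le> length w" "take (length z) (drop p w) = z" "z \<in> S"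
    "drop (p + length z) w \<in> Pref (star S)"
  shows "drop p w \<in> Pref (star S)"
proof -
  have "drop p w = z @ drop (p + length z) w"
    using assms(2) by (metis append_take_drop_id drop_drop add.commute)
  thus ?thesis using pref_cons assms by metis
qed

lemma split_k:
  assumes k4: "k \<ge> 4" and len: "p + k \<le> length w"
    and mem: "drop p w \<in> Pref (star (S_set k))"
  shows "(take (k-1) (drop p w) \<in> S_set k \<and> drop (p + (k-1)) w \<in> Pref (star (S_set k)))
       \<or> (take k (drop p w) \<in> S_set k \<and> drop (p + k) w \<in> Pref (star (S_set k)))"
proof -
  have ne: "drop p w \<noteq> []" using len k4 by auto
  have e: "[] \<notin> S_set k" using k4 S_len by fastforce
  have "\<forall>z\<in>S_set k. length z \<le> length (drop p w)" using S_len len by fastforce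
  then obtain z where z: "z \<in> S_set k" "take (length z) (drop p w) = z"
     "drop (length z) (drop p w) \<in> Pref (star (S_set k))"
    using pref_split[OF mem ne e] by blast
  show ?thesis using S_len[OF z(1)] z by (auto simp: add.commute)
qed



lemma mod_inj_window:
  fixes p1 p2 x k :: nat
  assumes "x \<le> p1" "p1 < x + k" "x \<le> p2" "p2 < x + k" "p1 mod k = p2 mod k"
  shows "p1 = p2"
proof (rule ccontr)
  assume ne: "p1 \<noteq> p2"
  { fix a b :: nat assume h: "x \<le> a" "b < x + k" "a < b" "a mod k = b mod k"
    hence "k dvd b - a" using mod_eq_dvd_iff_nat[of a b k] by simp
    moreover have "0 < b - a" "b - a < k" using h by auto
    ultimately have False using nat_dvd_not_less by blast }
  thus False using assms ne by (metis linorder_neqE_nat)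
qed



theorem lemma8:
  fixes k s t i c m :: nat and w :: "letter list"
  assumes "k \<ge> 4"
    and "occ w (u_word k) s"
    and "occ w (v_word k) t"
    and "consecutive k w s t"
    and "card (forb_local k w s) = card (forb_local k w t)"
    and "2 \<le> i" and "i \<le> k - 2"
    and "forb_local k w t = {0} \<union> {i..k-2}"
    and "c < k" and "1 \<le> m" and "m \<le> k"
    and "forb_local k w s = {(c + j) mod k | j. j < m}"
  shows "forb_local k w s = {0, 1} \<union> {i+2..k-1} \<or> forb_local k w s = {0} \<union> {i+1..k-1}"
proof -
  note k4 = assms(1) and i2 = assms(6) and ik = assms(7)
  define L where "L = Pref (star (S_set k))"
  define f where "f p \<longleftrightarrow> drop p w \<notin> L" for p
  have lu: "length (u_word k) = k" using k4 by (simp add: u_word_def)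
  have lv: "length (v_word k) = k" using k4 by (simp add: v_word_def)
  have os: "s + k \<le> length w" "take k (drop s w) = u_word k" using assms(2) lu by (auto simp: occ_def)
  have ot: "t + k \<le> length w" "take k (drop t w) = v_word k" using assms(3) lv by (auto simp: occ_def)
  have nth_s: "\<And>j. j < k \<Longrightarrow> w ! (s+j) = u_word k ! j"
    using os by (metis nth_take nth_drop add_leD1 le_add_diff_inverse le_diff_conv2 add.commute)
  have nth_t: "\<And>j. j < k \<Longrightarrow> w ! (t+j) = v_word k ! j"
    using ot by (metis nth_take nth_drop add_leD1 le_add_diff_inverse le_diff_conv2 add.commute)
  have st: "s < t" using assms(4) by (simp add: consecutive_def)
  have ts: "s + k \<le> t"
  proof (rule ccontr)
    assume "\<not> ?thesis"
    hence j: "t - s < k" "1 \<le> t - s" using st by auto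
    have "w ! t = u_word k ! (t - s)" using nth_s[OF j(1)] st by simp
    also have "\<dots> = a" using j by (simp add: u_word_def)
    finally have 1: "w ! t = a" .
    have "w ! t = v_word k ! 0" using nth_t[of 0] k4 by simp
    also have "\<dots> = b" using k4 by (cases "k - 1") (auto simp: v_word_def)
    finally show False using 1 by simp
  qed
  have cons2: "\<forall>r. s \<le> r \<and> r + k \<le> t + k \<and> (occ w (u_word k) r \<or> occ w (v_word k) r) \<longrightarrow> r = s \<or> r = t"
    using assms(4) ts by (auto simp: consecutive_def)
  have noocc: "take k (drop q w) \<in> S_set k" if q: "s < q" "q < t" for q
  proof -
    have len: "length (take k (drop q w)) = k" using q ot by auto
    have "take k (drop q w) \<noteq> u_word k"
    proof
      assume "take k (drop q w) = u_word k"
      hence o: "occ w (u_word k) q" using lu q ot by (simp add: occ_def)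
      have "s \<le> q \<and> q + k \<le> t + k \<and> (occ w (u_word k) q \<or> occ w (v_word k) q) \<longrightarrow> q = s \<or> q = t"
        using cons2 by blast
      thus False using o q by simp
    qed
    moreover have "take k (drop q w) \<noteq> v_word k"
    proof
      assume "take k (drop q w) = v_word k"
      hence o: "occ w (v_word k) q" using lv q ot by (simp add: occ_def)
      have "s \<le> q \<and> q + k \<le> t + k \<and> (occ w (u_word k) q \<or> occ w (v_word k) q) \<longrightarrow> q = s \<or> q = t"
        using cons2 by blast
      thus False using o q by simp
    qed
    ultimately show ?thesis using len by (simp add: S_set_def)
  qed
  have forb: "forbidden k w p \<longleftrightarrow> f p" if "p < length w" for p
    using that by (simp add: forbidden_def f_def L_def)
  have G1: "f (q+k)" if q: "s < q" "q < t" "f q" for q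
  proof (rule ccontr)
    assume "\<not> f (q+k)"
    hence "drop (q + length (take k (drop q w))) w \<in> L" using q ot by (simp add: f_def)
    hence "drop q w \<in> L" unfolding L_def
      by (rule step_block[rotated 2, OF noocc[OF q(1,2)]]) (use q ot in auto)
    thus False using q by (simp add: f_def)
  qed
  have G2: "f q" if q: "s < q" "q < t" "f (q+(k-1))" "f (q+k)" for q
  proof (rule ccontr)
    assume "\<not> f q"
    hence "drop q w \<in> L" by (simp add: f_def)
    thus False using split_k[OF k4, of q w] q ot by (auto simp: f_def L_def)
  qed
  have H1: "f (s+(k-1))" if "f s"
  proof (rule ccontr)
    assume h: "\<not> f (s+(k-1))"
    have tk: "take (k-1) (drop s w) = b # replicate (k-2) a"
    proof -
      have "take (k-1) (drop s w) = take (k-1) (take k (drop s w))" by (simp add: min_def)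
      also have "\<dots> = take (k-1) (b # replicate (k-1) a)" using os by (simp add: u_word_def)
      also have "\<dots> = b # replicate (k-2) a" using k4
        by (simp add: take_Cons' take_replicate min_def numeral_2_eq_2)
      finally show ?thesis .
    qed
    have zS: "b # replicate (k-2) a \<in> S_set k"
    proof -
      have "b # replicate (k-2) a \<noteq> replicate (k-1) a"
      proof
        assume "b # replicate (k-2) a = replicate (k-1) a"
        hence "(b # replicate (k-2) a) ! 0 = replicate (k-1) a ! 0" by simp
        thus False using k4 by simp
      qed
      moreover have "b # replicate (k-2) a \<noteq> replicate (k-1) b"
      proof
        assume "b # replicate (k-2) a = replicate (k-1) b"
        hence "(b # replicate (k-2) a) ! 1 = replicate (k-1) b ! 1" by simp
        thus False using k4 by simp
      qed
      ultimately show ?thesis using k4 by (auto simp: S_set_def)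
    qed
    have lz: "length (b # replicate (k-2) a) = k - 1" using k4 by simp
    have "drop s w \<in> L" unfolding L_def
      apply (rule step_block[of s "b # replicate (k-2) a" w])
      using os k4 tk zS h lz by (auto simp: f_def L_def)
    thus False using that by (simp add: f_def)
  qed
  have tmk: "t mod k < k" using k4 by simp
  define idx where "idx p = (p + k - t mod k) mod k" for p
  have I1: "idx (p+k) = idx p" for p
  proof -
    have "p + k + k - t mod k = (p + k - t mod k) + k"
      using tmk by simp
    thus ?thesis unfolding idx_def by simp
  qed
  have I2: "idx (t+j) = j" if "j < k" for j
  proof -
    have e: "k * (t div k) + t mod k = t" by (rule mult_div_mod_eq)
    have "t + j + k - t mod k = j + k * (t div k) + k"
      using e by linarith
    thus ?thesis unfolding idx_def using that by simp
  qed
  have I3: "idx (p+j) = (idx p + j) mod k" for p j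
  proof -
    have "p + j + k - t mod k = (p + k - t mod k) + j"
      using tmk by simp
    thus ?thesis unfolding idx_def by (simp add: mod_add_left_eq)
  qed
  have idxk: "idx p < k" for p using k4 by (simp add: idx_def)
  have aux: "(x + d) mod k \<noteq> x" if "x < k" "0 < d" "d < k" for x d
  proof (cases "x + d < k")
    case True thus ?thesis using that by simp
  next
    case False
    hence "(x + d) mod k = (x + d - k) mod k" by (simp add: mod_if)
    also have "\<dots> = x + d - k" using that by simp
    finally show ?thesis using that False by simp
  qed
  have I4: "p1 = p2" if "x \<le> p1" "p1 < x + k" "x \<le> p2" "p2 < x + k" "idx p1 = idx p2" for x p1 p2
  proof (rule ccontr)
    assume ne: "p1 \<noteq> p2"
    { fix q1 q2 assume h: "x \<le> q1" "q2 < x + k" "q1 < q2" "idx q1 = idx q2"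
      have "idx q2 = (idx q1 + (q2 - q1)) mod k" using I3[of q1 "q2 - q1"] h by simp
      moreover have "(idx q1 + (q2 - q1)) mod k \<noteq> idx q1"
        by (rule aux) (use idxk h in auto)
      ultimately have False using h(4) by simp }
    thus False using that ne by (metis linorder_neqE_nat)
  qed
  define X where "X x = {idx p | p. x \<le> p \<and> p < x + k \<and> f p}" for x
  define P0 where "P0 = {0} \<union> {i..k-2}"
  define UC where "UC Y \<longleftrightarrow> (\<forall>r. r \<in> Y \<longrightarrow> i \<le> r \<longrightarrow> r+1 \<le> k-2 \<longrightarrow> r+1 \<in> Y)" for Y
  have Fq: "forb_local k w t = {j. j < k \<and> f (t+j)}"
    using forb ot unfolding forb_local_def by auto
  have Xt: "X t = P0"
  proof -
    have "X t = {j. j < k \<and> f (t+j)}"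
    proof (intro set_eqI iffI)
      fix r assume "r \<in> X t"
      then obtain p where p: "r = idx p" "t \<le> p" "p < t + k" "f p" unfolding X_def by blast
      have "p - t < k" using p by simp
      hence "idx (t + (p - t)) = p - t" by (rule I2)
      hence "idx p = p - t" using p by simp
      thus "r \<in> {j. j < k \<and> f (t+j)}" using p by auto
    next
      fix r assume "r \<in> {j. j < k \<and> f (t+j)}"
      hence "r < k" "f (t + r)" by auto
      moreover have "idx (t + r) = r" using I2 \<open>r < k\<close> by simp
      ultimately show "r \<in> X t" unfolding X_def
        by (intro CollectI exI[of _ "t + r"]) simp
    qed
    thus ?thesis using Fq assms(8) P0_def by simp
  qed
  have step: "X q \<subseteq> P0 \<and> UC (X q)" if q: "s < q" "q < t" and IH: "X (q+1) \<subseteq> P0" "UC (X (q+1))" for q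
  proof -
    have mem1: "\<exists>p1. q+1 \<le> p1 \<and> p1 < q+1+k \<and> f p1 \<and> idx p1 = r" if "r \<in> X q" for r
    proof -
      obtain p where p: "r = idx p" "q \<le> p" "p < q + k" "f p" using \<open>r \<in> X q\<close> unfolding X_def by blast
      show ?thesis
      proof (cases "p = q")
        case True
        have "q + 1 \<le> q + k \<and> q + k < q+1+k \<and> f (q+k) \<and> idx (q+k) = r"
          using G1[OF q] p True I1[of q] k4 by simp
        thus ?thesis by blast
      next
        case False
        hence "q + 1 \<le> p \<and> p < q+1+k \<and> f p \<and> idx p = r" using p by simp
        thus ?thesis by blast
      qed
    qed
    have sub: "X q \<subseteq> X (q+1)"
    proof
      fix r assume "r \<in> X q"
      then obtain p1 where "q+1 \<le> p1" "p1 < q+1+k" "f p1" "idx p1 = r" using mem1 by blast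
      hence "r = idx p1 \<and> q + 1 \<le> p1 \<and> p1 < q + 1 + k \<and> f p1" by simp
      thus "r \<in> X (q+1)" unfolding X_def by blast
    qed
    have "UC (X q)" unfolding UC_def
    proof (intro allI impI)
      fix r assume r: "r \<in> X q" "i \<le> r" "r + 1 \<le> k - 2"
      obtain p1 where p1: "q+1 \<le> p1" "p1 < q+1+k" "f p1" "idx p1 = r" using mem1[OF r(1)] by blast
      have "r \<in> X (q+1)" using sub r(1) by blast
      moreover have "\<forall>r. r \<in> X (q+1) \<longrightarrow> i \<le> r \<longrightarrow> r+1 \<le> k-2 \<longrightarrow> r+1 \<in> X (q+1)"
        using IH(2) by (simp only: UC_def)
      ultimately have "r + 1 \<in> X (q+1)" using r(2,3) by blast
      then obtain p2 where p2': "r + 1 = idx p2" "q+1 \<le> p2" "p2 < q+1+k" "f p2" unfolding X_def by blast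
      hence p2: "q+1 \<le> p2" "p2 < q+1+k" "f p2" "idx p2 = r+1" by simp_all
      show "r + 1 \<in> X q"
      proof (cases "p2 < q + k")
        case True
        have "r + 1 = idx p2 \<and> q \<le> p2 \<and> p2 < q + k \<and> f p2" using True p2' by simp
        thus ?thesis unfolding X_def by blast
      next
        case False
        hence p2e: "p2 = q + k" using p2 by simp
        have "idx (q+(k-1)+1) = (idx (q+(k-1)) + 1) mod k" by (rule I3)
        moreover have "q + (k-1) + 1 = q + k" using k4 by simp
        ultimately have "(idx (q+(k-1)) + 1) mod k = r + 1" using p2(4) p2e by simp
        moreover have "idx (q+(k-1)) < k" by (rule idxk)
        moreover have "r + 1 < k" using r k4 by simp
        ultimately have "idx (q+(k-1)) = r"
          by (cases "idx (q+(k-1)) + 1 < k") (auto simp: not_less le_Suc_eq)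
        hence "q + (k-1) = p1" using I4[of "q+1" "q+(k-1)" p1] p1 k4 by simp
        hence "f (q + (k-1))" using p1 by simp
        hence fq: "f q" using G2[OF q] p2(3) p2e by simp
        have "idx q = r + 1" using I1[of q] p2(4) p2e by simp
        hence "r + 1 = idx q \<and> q \<le> q \<and> q < q + k \<and> f q" using fq k4 by simp
        thus ?thesis unfolding X_def by blast
      qed
    qed
    thus ?thesis using sub IH by blast
  qed
  have inv: "X (t - d) \<subseteq> P0 \<and> UC (X (t - d))" if "d \<le> t - (s+1)" for d
    using that
  proof (induction d)
    case 0
    thus ?case using Xt unfolding UC_def P0_def by auto
  next
    case (Suc d)
    have "X (t - Suc d) \<subseteq> P0 \<and> UC (X (t - Suc d))"
      apply (rule step[of "t - Suc d"])
      using Suc ts k4 by (auto simp: Suc_diff_Suc)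
    thus ?case .
  qed
  define Y where "Y = X (s+1)"
  have "t - (t - (s+1)) = s+1" using ts k4 by simp
  hence invY: "Y \<subseteq> P0" "UC Y" using inv[of "t-(s+1)"] Y_def by auto
  define e where "e = idx s"
  define Fp where "Fp = forb_local k w s"
  have Fp: "Fp = {j. j<k \<and> f (s+j)}" using forb os unfolding Fp_def forb_local_def by auto
  define g where "g j = (e + j) mod k" for j
  define Z where "Z = g ` Fp"
  have idxs: "idx (s+j) = g j" for j using I3 e_def g_def by simp
  have ek: "e < k" using idxk e_def by simp
  have ginj: "j1 = j2" if "j1 < k" "j2 < k" "g j1 = g j2" for j1 j2
    using I4[of s "s+j1" "s+j2"] that idxs by simp
  have inj: "inj_on g Fp" using ginj Fp by (auto intro: inj_onI)
  have cFq: "card P0 = k - i" using i2 ik by (simp add: P0_def)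
  have cardZ: "card Z = k - i"
    using card_image[OF inj] assms(5) assms(8) cFq Z_def Fp_def P0_def by simp
  have blk: "Z = {((e + c) + j) mod k | j. j < m}"
  proof (intro set_eqI iffI)
    fix z assume "z \<in> Z"
    then obtain j where "j < m" "z = g ((c + j) mod k)" unfolding Z_def Fp_def assms(12) by blast
    hence "z = ((e + c) + j) mod k \<and> j < m" by (simp add: g_def mod_add_right_eq add.assoc)
    thus "z \<in> {((e + c) + j) mod k | j. j < m}" by blast
  next
    fix z assume "z \<in> {((e + c) + j) mod k | j. j < m}"
    then obtain j where j: "j < m" "z = ((e + c) + j) mod k" by blast
    hence "z = g ((c + j) mod k)" by (simp add: g_def mod_add_right_eq add.assoc)
    moreover have "(c + j) mod k \<in> Fp" unfolding Fp_def assms(12) using j by blast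
    ultimately show "z \<in> Z" unfolding Z_def by blast
  qed
  have Z1: "Z \<subseteq> Y \<union> {e}"
  proof
    fix z assume "z \<in> Z"
    then obtain j where j: "j \<in> Fp" "z = g j" unfolding Z_def by blast
    show "z \<in> Y \<union> {e}"
    proof (cases "j = 0")
      case True thus ?thesis using j ek by (simp add: g_def)
    next
      case False
      have "z = idx (s+j) \<and> s + 1 \<le> s + j \<and> s + j < s + 1 + k \<and> f (s+j)"
        using j False Fp idxs by auto
      hence "z \<in> Y" unfolding Y_def X_def by blast
      thus ?thesis by simp
    qed
  qed
  have Z2: "Y - {e} \<subseteq> Z"
  proof
    fix r assume r: "r \<in> Y - {e}"
    then obtain p where p: "r = idx p" "s + 1 \<le> p" "p < s + 1 + k" "f p" unfolding Y_def X_def by blast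
    have "p \<noteq> s + k" using p r I1[of s] e_def by auto
    hence "p - s < k" "f (s + (p - s))" using p by auto
    hence "p - s \<in> Fp" using Fp by simp
    moreover have "g (p - s) = r" using idxs[of "p-s"] p by simp
    ultimately show "r \<in> Z" unfolding Z_def by blast
  qed
  have UCY: "\<forall>r. r \<in> Y \<longrightarrow> i \<le> r \<longrightarrow> r+1 \<le> k-2 \<longrightarrow> r+1 \<in> Y"
    using invY(2) by (simp only: UC_def)
  have Z3: "(e+k-1) mod k \<in> Y" if eZ: "e \<in> Z"
  proof -
    obtain j where j: "j \<in> Fp" "e = g j" using eZ unfolding Z_def by blast
    have g0: "g 0 = e" using ek by (simp add: g_def)
    have jk: "j < k" using j(1) Fp by simp
    have "j = 0" using ginj[of j 0, OF jk _] j(2) g0 k4 by simp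
    hence "f s" using j(1) Fp by simp
    hence fk: "f (s + (k-1))" by (rule H1)
    have "idx (s + (k-1)) = g (k-1)" by (rule idxs)
    also have "\<dots> = (e+k-1) mod k" unfolding g_def using k4 by simp
    finally have "(e+k-1) mod k = idx (s + (k-1))" by simp
    moreover have "s + 1 \<le> s + (k-1)" "s + (k-1) < s + 1 + k" using k4 by simp_all
    ultimately have "(e+k-1) mod k \<in> X (s+1)" unfolding X_def using fk by blast
    thus ?thesis unfolding Y_def .
  qed
  have YP: "Y \<subseteq> {0} \<union> {i..k-2}" using invY(1) P0_def by simp
  have res: "(e = k-1 \<and> (Z = {i..k-1} \<or> Z = {0} \<union> {i+1..k-1})) \<or> (e = 1 \<and> i = k-2 \<and> Z = {0,1})"
    by (rule final_comb[OF k4 i2 ik YP UCY ek Z1 Z2 Z3 cardZ blk])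
  have Fprec: "Fp = {j. j < k \<and> g j \<in> Z}"
  proof (intro set_eqI iffI)
    fix j assume "j \<in> Fp" thus "j \<in> {j. j < k \<and> g j \<in> Z}" using Fp Z_def by auto
  next
    fix j assume "j \<in> {j. j < k \<and> g j \<in> Z}"
    then obtain j' where "j < k" "j' \<in> Fp" "g j = g j'" unfolding Z_def by blast
    thus "j \<in> Fp" using ginj[of j j'] Fp by auto
  qed
  have hm1: "(k - 1 + j) mod k = (if j = 0 then k - 1 else j - 1)" if "j < k" for j
  proof (cases "j = 0")
    case True thus ?thesis using k4 by simp
  next
    case False
    have eq: "k - 1 + j = (j - 1) + k" using k4 False by simp
    have "(k - 1 + j) mod k = ((j - 1) + k) mod k" by (simp only: eq)
    also have "\<dots> = j - 1" using that by simp
    finally show ?thesis using False by simp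
  qed
  have hp1: "(1 + j) mod k = (if j = k - 1 then 0 else j + 1)" if "j < k" for j
    using that k4 by (cases "j = k - 1") auto
  show ?thesis
  proof -
    from res show ?thesis
    proof (elim disjE conjE)
      assume e1: "e = k - 1" and Zd: "Z = {i..k-1}"
      have gj: "g j = (if j = 0 then k - 1 else j - 1)" if "j < k" for j
        using hm1[OF that] e1 by (simp add: g_def)
      have "Fp = {j. j < k \<and> (if j = 0 then k - 1 else j - 1) \<in> Z}"
        unfolding Fprec using gj by auto
      also have "\<dots> = {0} \<union> {i+1..k-1}" unfolding Zd using k4 i2 ik by auto
      finally show ?thesis using Fp_def by simp
    next
      assume e1: "e = k - 1" and Zd: "Z = {0} \<union> {i+1..k-1}"
      have gj: "g j = (if j = 0 then k - 1 else j - 1)" if "j < k" for j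
        using hm1[OF that] e1 by (simp add: g_def)
      have "Fp = {j. j < k \<and> (if j = 0 then k - 1 else j - 1) \<in> Z}"
        unfolding Fprec using gj by auto
      also have "\<dots> = {0, 1} \<union> {i+2..k-1}" unfolding Zd using k4 i2 ik by auto
      finally show ?thesis using Fp_def by simp
    next
      assume e1: "e = 1" and ii: "i = k - 2" and Zd: "Z = {0,1}"
      have gj: "g j = (if j = k - 1 then 0 else j + 1)" if "j < k" for j
        using hp1[OF that] e1 by (simp add: g_def)
      have "Fp = {j. j < k \<and> (if j = k - 1 then 0 else j + 1) \<in> Z}"
        unfolding Fprec using gj by auto
      also have "\<dots> = {0} \<union> {i+1..k-1}" unfolding Zd using k4 ii by auto
      finally show ?thesis using Fp_def by simp
    qed
  qed
qed


end
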